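(* Let $(X_n,\|\cdot\|_n)_{n\ge1}$ be a sequence of Banach spaces, let $Z=(\sum_{n=1}^\infty\oplus X_n)_1$ with norm $\|(x_n)\|_Z=\sum_n\|x_n\|_n$, and let $(X,\|\cdot\|)$ be the completion of $c_{00}((X_n))$ under the norm defined in the context. Then $Z$ and $X$ are $2$-isomorphic; more precisely, the identity map of $c_{00}((X_n))$ extends to a linear isomorphism $T:Z\to X$ with $\frac12\|z\|_Z\le\|Tz\|\le\|z\|_Z$ for all $z\in Z$.
   Context: $c_{00}((X_n))$ is the vector space of sequences $(x_1,x_2,\dots)$ with $x_k\in X_k$ and only finitely many $x_k\ne0$; $(x_1,\dots,x_n)$ denotes $(x_1,\dots,x_n,0,0,\dots)$. The norm is defined inductively: $\|(x_1)\|=\|x_1\|_1$ (the norm of $X_1$), and for $n\ge2$, $$\|(x_1,\dots,x_n)\|=\Big(1-\tfrac{1}{n+1}\Big)\big(\|x_n\|_n+\|(x_1,\dots,x_{n-1})\|\big)+\tfrac{1}{n+1}\max\Big\{\tfrac{\|x_n\|_n}{n},\ \|(x_1,\dots,x_{n-1})\|\Big\}.$$ *)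

theory Defs
  imports "HOL-Analysis.Analysis"
begin

text \<open>The spaces X_n (n \<ge> 1) are modelled as closed linear subspaces S n of one
  ambient real Banach space 'a (every sequence of Banach spaces embeds isometrically
  into e.g. their l_infinity-sum, so this is no loss of generality).
  Sequences are functions nat => 'a, indexed from 1; the entry at index 0 is required to be 0.\<close>

definition c00 :: "(nat \<Rightarrow> 'a set) \<Rightarrow> (nat \<Rightarrow> 'a::real_normed_vector) set" where
  "c00 S = {x. x 0 = 0 \<and> (\<forall>k. x k \<in> S k) \<and> finite {k. x k \<noteq> 0}}"

fun tnorm :: "(nat \<Rightarrow> 'a::real_normed_vector) \<Rightarrow> nat \<Rightarrow> real" where
  "tnorm x 0 = 0"
| "tnorm x (Suc n) =
     (if n = 0 then norm (x 1)
      else (1 - 1 / (real (Suc n) + 1)) * (norm (x (Suc n)) + tnorm x n)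
           + (1 / (real (Suc n) + 1)) * max (norm (x (Suc n)) / real (Suc n)) (tnorm x n))"

definition c00_norm :: "(nat \<Rightarrow> 'a::real_normed_vector) \<Rightarrow> real" where
  "c00_norm x = tnorm x (LEAST N. \<forall>k>N. x k = 0)"

definition l1sum :: "(nat \<Rightarrow> 'a set) \<Rightarrow> (nat \<Rightarrow> 'a::real_normed_vector) set" where
  "l1sum S = {z. z 0 = 0 \<and> (\<forall>k. z k \<in> S k) \<and> summable (\<lambda>k. norm (z k))}"

definition l1norm :: "(nat \<Rightarrow> 'a::real_normed_vector) \<Rightarrow> real" where
  "l1norm z = (\<Sum>k. norm (z k))"

end

theory Submission
  imports Defs
begin


lemma key_ineq:
  fixes a b m :: real
  assumes a: "0 \<le> a" and b: "0 \<le> b" and m: "1 \<le> m"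
  shows "(1 - 1 / (m + 1)) * (a + b) + (1 / (m + 1)) * max (a / m) b \<le> a + b"
    and "b + a / 2 \<le> (1 - 1 / (m + 1)) * (a + b) + (1 / (m + 1)) * max (a / m) b"
proof -
  have am: "a / m \<le> a" using a m by (simp add: divide_le_eq mult_le_cancel_left1)
  have mx1: "max (a / m) b \<le> a + b" using am a b by simp
  have mx2: "b \<le> max (a / m) b" by simp
  define t where "t = 1 / (m + 1)"
  have t0: "0 < t" and t1: "t \<le> 1/2" using m by (auto simp: t_def field_simps)
  show "(1 - 1 / (m + 1)) * (a + b) + (1 / (m + 1)) * max (a / m) b \<le> a + b"
    unfolding t_def[symmetric] using mult_left_mono[OF mx1, of t] t0 by (simp add: algebra_simps)
  show "b + a / 2 \<le> (1 - 1 / (m + 1)) * (a + b) + (1 / (m + 1)) * max (a / m) b"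
  proof -
    have h1: "t * b \<le> t * max (a / m) b" using mult_left_mono[OF mx2, of t] t0 by simp
    have h2: "t * a \<le> a / 2" using mult_right_mono[OF t1 a] by simp
    show ?thesis unfolding t_def[symmetric] using h1 h2 by (simp add: algebra_simps)
  qed
qed

lemma tnorm_bounds:
  "0 \<le> tnorm x n \<and> tnorm x n \<le> (\<Sum>k\<in>{1..n}. norm (x k)) \<and> (1/2) * (\<Sum>k\<in>{1..n}. norm (x k)) \<le> tnorm x n"
proof (induction n)
  case 0 then show ?case by simp
next
  case (Suc n)
  show ?case
  proof (cases "n = 0")
    case True then show ?thesis by simp
  next
    case False
    have m: "1 \<le> real (Suc n)" by simp
    note k = key_ineq[OF norm_ge_zero[of "x (Suc n)"] conjunct1[OF Suc.IH] m]
    have s: "(\<Sum>k\<in>{1..Suc n}. norm (x k)) = (\<Sum>k\<in>{1..n}. norm (x k)) + norm (x (Suc n))"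
      by (simp add: sum.cl_ivl_Suc)
    have e: "tnorm x (Suc n) = (1 - 1 / (real (Suc n) + 1)) * (norm (x (Suc n)) + tnorm x n)
           + (1 / (real (Suc n) + 1)) * max (norm (x (Suc n)) / real (Suc n)) (tnorm x n)"
      using False by simp
    have "0 \<le> tnorm x n + norm (x (Suc n)) / 2" using Suc.IH by simp
    hence "0 \<le> tnorm x (Suc n)" unfolding e using k(2) by linarith
    moreover have "tnorm x (Suc n) \<le> (\<Sum>k\<in>{1..Suc n}. norm (x k))"
      unfolding s e using k(1) Suc.IH by linarith
    moreover have "(1/2) * (\<Sum>k\<in>{1..Suc n}. norm (x k)) \<le> tnorm x (Suc n)"
    proof -
      have "(1/2) * ((\<Sum>k\<in>{1..n}. norm (x k)) + norm (x (Suc n)))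
           = (1/2) * (\<Sum>k\<in>{1..n}. norm (x k)) + norm (x (Suc n)) / 2" by simp
      then show ?thesis unfolding s e using k(2) Suc.IH by linarith
    qed
    ultimately show ?thesis by blast
  qed
qed

lemma c00_bounds:
  assumes "x \<in> c00 S"
  shows "summable (\<lambda>k. norm (x k)) \<and> (1/2) * l1norm x \<le> c00_norm x \<and> c00_norm x \<le> l1norm x"
proof -
  have x0: "x 0 = 0" and fin: "finite {k. x k \<noteq> 0}" using assms by (auto simp: c00_def)
  obtain m where m: "\<forall>k\<in>{k. x k \<noteq> 0}. k < m" using fin finite_nat_set_iff_bounded by blast
  have ex: "\<exists>N. \<forall>k>N. x k = 0" using m by (metis mem_Collect_eq not_less_iff_gr_or_eq)
  define N where "N = (LEAST N. \<forall>k>N. x k = 0)"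
  have PN: "\<forall>k>N. x k = 0" unfolding N_def by (rule LeastI_ex[OF ex])
  have z: "\<And>n. n \<notin> {1..N} \<Longrightarrow> norm (x n) = 0"
    using PN x0 by (metis atLeastAtMost_iff le_less_linear less_one norm_zero)
  have l: "l1norm x = (\<Sum>k\<in>{1..N}. norm (x k))"
    unfolding l1norm_def by (rule suminf_finite) (use z in auto)
  have sm: "summable (\<lambda>k. norm (x k))" by (rule summable_finite[of "{1..N}"]) (use z in auto)
  have c: "c00_norm x = tnorm x N" unfolding c00_norm_def N_def ..
  show ?thesis using tnorm_bounds[of x N] l c sm by auto
qed


lemma term_le_l1norm:
  assumes "summable (\<lambda>k. norm (z k :: 'a::real_normed_vector))"
  shows "norm (z k) \<le> l1norm z"
proof -
  have "sum (\<lambda>k. norm (z k)) {k} \<le> (\<Sum>k. norm (z k))"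
    by (rule sum_le_suminf) (use assms in auto)
  thus ?thesis by (simp add: l1norm_def)
qed

lemma l1norm_nonneg: "summable (\<lambda>k. norm (z k :: 'a::real_normed_vector)) \<Longrightarrow> 0 \<le> l1norm z"
  unfolding l1norm_def by (rule suminf_nonneg) auto

lemma summable_diff_norm:
  fixes x y :: "nat \<Rightarrow> 'a::real_normed_vector"
  assumes "summable (\<lambda>k. norm (x k))" "summable (\<lambda>k. norm (y k))"
  shows "summable (\<lambda>k. norm (x k - y k))"
  by (rule summable_norm_comparison_test[OF _ summable_add[OF assms]])
     (auto intro: norm_triangle_ineq4)

lemma l1_complete:
  fixes x :: "nat \<Rightarrow> nat \<Rightarrow> 'a::banach"
  assumes clsd: "\<And>n. closed (S n)"
    and xs: "\<And>j. x j \<in> l1sum S"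
    and cau: "\<And>e. e > 0 \<Longrightarrow> \<exists>N. \<forall>i\<ge>N. \<forall>j\<ge>N. l1norm (\<lambda>k. x i k - x j k) < e"
  shows "\<exists>z\<in>l1sum S. (\<lambda>j. l1norm (\<lambda>k. x j k - z k)) \<longlonglongrightarrow> 0"
proof -
  have sx: "\<And>j. summable (\<lambda>k. norm (x j k))" using xs by (auto simp: l1sum_def)
  have sd: "\<And>i j. summable (\<lambda>k. norm (x i k - x j k))" using sx summable_diff_norm by blast
  have pt: "\<And>i j k. norm (x i k - x j k) \<le> l1norm (\<lambda>k. x i k - x j k)"
    using term_le_l1norm[OF sd] by blast
  have C: "\<And>k. Cauchy (\<lambda>j. x j k)"
  proof (rule CauchyI)
    fix k and e :: real assume "0 < e"
    then obtain N where "\<forall>i\<ge>N. \<forall>j\<ge>N. l1norm (\<lambda>k. x i k - x j k) < e" using cau by blast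
    thus "\<exists>M. \<forall>m\<ge>M. \<forall>n\<ge>M. norm (x m k - x n k) < e" using pt by (meson le_less_trans)
  qed
  define z where "z k = lim (\<lambda>j. x j k)" for k
  have zl: "\<And>k. (\<lambda>j. x j k) \<longlonglongrightarrow> z k"
    unfolding z_def using C Cauchy_convergent convergent_LIMSEQ_iff by blast
  have z0: "z 0 = 0"
  proof -
    have "(\<lambda>j. x j 0) = (\<lambda>j. 0)" using xs by (auto simp: l1sum_def)
    thus ?thesis using zl[of 0] LIMSEQ_unique tendsto_const by metis
  qed
  have zS: "\<And>k. z k \<in> S k"
  proof -
    fix k show "z k \<in> S k"
      by (rule closed_sequentially[OF clsd _ zl]) (use xs in \<open>auto simp: l1sum_def\<close>)
  qed
  have main: "\<exists>N. \<forall>j\<ge>N. summable (\<lambda>k. norm (x j k - z k)) \<and> l1norm (\<lambda>k. x j k - z k) \<le> e"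
    if e: "e > 0" for e
  proof -
    obtain N where N: "\<forall>i\<ge>N. \<forall>j\<ge>N. l1norm (\<lambda>k. x i k - x j k) < e" using cau e by blast
    have "summable (\<lambda>k. norm (x j k - z k)) \<and> l1norm (\<lambda>k. x j k - z k) \<le> e" if j: "j \<ge> N" for j
    proof -
      have ps: "(\<Sum>k<n. norm (x j k - z k)) \<le> e" for n
      proof (rule LIMSEQ_le_const2)
        show "(\<lambda>i. \<Sum>k<n. norm (x j k - x i k)) \<longlonglongrightarrow> (\<Sum>k<n. norm (x j k - z k))"
          by (intro tendsto_sum tendsto_norm tendsto_diff tendsto_const zl)
        show "\<exists>M. \<forall>i\<ge>M. (\<Sum>k<n. norm (x j k - x i k)) \<le> e"
        proof (intro exI allI impI)
          fix i assume i: "i \<ge> N"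
          have "(\<Sum>k<n. norm (x j k - x i k)) \<le> (\<Sum>k. norm (x j k - x i k))"
            by (rule sum_le_suminf[OF sd]) auto
          also have "\<dots> < e" using N i j by (simp add: l1norm_def)
          finally show "(\<Sum>k<n. norm (x j k - x i k)) \<le> e" by simp
        qed
      qed
      have s: "summable (\<lambda>k. norm (x j k - z k))"
        by (rule summableI_nonneg_bounded[OF _ ps]) auto
      show ?thesis using s suminf_le_const[OF s ps] by (simp add: l1norm_def)
    qed
    thus ?thesis by blast
  qed
  obtain N1 where N1: "\<forall>j\<ge>N1. summable (\<lambda>k. norm (x j k - z k)) \<and> l1norm (\<lambda>k. x j k - z k) \<le> 1"
    using main[of 1] by auto
  have sz: "summable (\<lambda>k. norm (z k))"
  proof (rule summable_norm_comparison_test)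
    show "\<exists>N. \<forall>n\<ge>N. norm (z n) \<le> norm (x N1 n - z n) + norm (x N1 n)"
      by (metis norm_minus_commute norm_triangle_ineq4 order_trans add.commute norm_diff_triangle_ineq
          diff_add_cancel norm_triangle_ineq)
    show "summable (\<lambda>n. norm (x N1 n - z n) + norm (x N1 n))"
      using N1 sx by (intro summable_add) auto
  qed
  have zin: "z \<in> l1sum S" using z0 zS sz by (auto simp: l1sum_def)
  have "(\<lambda>j. l1norm (\<lambda>k. x j k - z k)) \<longlonglongrightarrow> 0"
  proof (rule LIMSEQ_I)
    fix r :: real assume r: "0 < r"
    obtain N where N: "\<forall>j\<ge>N. summable (\<lambda>k. norm (x j k - z k)) \<and> l1norm (\<lambda>k. x j k - z k) \<le> r/2"
      using main[of "r/2"] r by auto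
    show "\<exists>no. \<forall>n\<ge>no. norm (l1norm (\<lambda>k. x n k - z k) - 0) < r"
    proof (intro exI allI impI)
      fix n assume "n \<ge> N"
      with N have "summable (\<lambda>k. norm (x n k - z k))" "l1norm (\<lambda>k. x n k - z k) \<le> r/2" by auto
      with l1norm_nonneg[OF this(1)] r show "norm (l1norm (\<lambda>k. x n k - z k) - 0) < r" by simp
    qed
  qed
  with zin show ?thesis by blast
qed


definition sgl :: "nat \<Rightarrow> 'a \<Rightarrow> nat \<Rightarrow> 'a::zero" where
  "sgl k v = (\<lambda>i. if i = k then v else 0)"
definition trn :: "(nat \<Rightarrow> 'a) \<Rightarrow> nat \<Rightarrow> nat \<Rightarrow> 'a::zero" where
  "trn z n = (\<lambda>i. if i < n then z i else 0)"

lemma l1norm_sgl: "l1norm (sgl k (v::'a::real_normed_vector)) = norm v"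
proof -
  have "l1norm (sgl k v) = (\<Sum>i\<in>{k}. norm (sgl k v i))"
    unfolding l1norm_def by (rule suminf_finite) (auto simp: sgl_def)
  thus ?thesis by (simp add: sgl_def)
qed

lemma l1norm_trn: "l1norm (trn z n) = (\<Sum>k<n. norm (z k :: 'a::real_normed_vector))"
proof -
  have "l1norm (trn z n) = (\<Sum>i\<in>{..<n}. norm (trn z n i))"
    unfolding l1norm_def by (rule suminf_finite) (auto simp: trn_def)
  thus ?thesis by (simp add: trn_def)
qed

lemma sgl_c00:
  assumes "subspace (S k)" "\<And>i. subspace (S i)" "z 0 = 0" "\<And>i. z i \<in> S i"
  shows "sgl k (z k) \<in> c00 S"
proof -
  have "{i. sgl k (z k) i \<noteq> 0} \<subseteq> {k}" by (auto simp: sgl_def)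
  hence "finite {i. sgl k (z k) i \<noteq> 0}" by (rule finite_subset) simp
  moreover have "sgl k (z k) i \<in> S i" for i using assms by (auto simp: sgl_def subspace_0)
  ultimately show ?thesis using assms by (auto simp: c00_def sgl_def)
qed

lemma trn_c00:
  assumes "\<And>i. subspace (S i)" "z 0 = 0" "\<And>i. z i \<in> S i"
  shows "trn z n \<in> c00 S"
proof -
  have "{i. trn z n i \<noteq> 0} \<subseteq> {..<n}" by (auto simp: trn_def)
  hence "finite {i. trn z n i \<noteq> 0}" by (rule finite_subset) simp
  moreover have "trn z n i \<in> S i" for i using assms by (auto simp: trn_def subspace_0)
  ultimately show ?thesis using assms by (auto simp: c00_def trn_def)
qed


theorem proposition1p3:
  fixes S :: "nat \<Rightarrow> 'a::banach set"
    and J :: "(nat \<Rightarrow> 'a) \<Rightarrow> 'b::banach"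
  assumes subsp: "\<And>n. subspace (S n)"
    and clsd: "\<And>n. closed (S n)"
    and J_add: "\<And>x y. x \<in> c00 S \<Longrightarrow> y \<in> c00 S \<Longrightarrow> J (\<lambda>k. x k + y k) = J x + J y"
    and J_scale: "\<And>c x. x \<in> c00 S \<Longrightarrow> J (\<lambda>k. c *\<^sub>R x k) = c *\<^sub>R J x"
    and J_isom: "\<And>x. x \<in> c00 S \<Longrightarrow> norm (J x) = c00_norm x"
    and J_dense: "closure (J ` c00 S) = UNIV"
  shows "\<exists>T :: (nat \<Rightarrow> 'a) \<Rightarrow> 'b.
           (\<forall>z\<in>l1sum S. \<forall>w\<in>l1sum S. T (\<lambda>k. z k + w k) = T z + T w)
         \<and> (\<forall>c. \<forall>z\<in>l1sum S. T (\<lambda>k. c *\<^sub>R z k) = c *\<^sub>R T z)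
         \<and> (\<forall>x\<in>c00 S. T x = J x)
         \<and> bij_betw T (l1sum S) UNIV
         \<and> (\<forall>z\<in>l1sum S. (1/2) * l1norm z \<le> norm (T z) \<and> norm (T z) \<le> l1norm z)"
proof -
  have Jb: "(1/2) * l1norm x \<le> norm (J x) \<and> norm (J x) \<le> l1norm x" if "x \<in> c00 S" for x
    using c00_bounds[OF that] J_isom[OF that] by simp
  have c00_l1: "x \<in> l1sum S" if "x \<in> c00 S" for x
    using c00_bounds[OF that] that by (auto simp: c00_def l1sum_def)
  have L0: "z 0 = 0" "\<And>i. z i \<in> S i" "summable (\<lambda>k. norm (z k))" if "z \<in> l1sum S" for z
    using that by (auto simp: l1sum_def)
  have sc: "sgl k (z k) \<in> c00 S" if "z \<in> l1sum S" for z k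
    by (rule sgl_c00[of S k z]) (use subsp L0(1,2)[OF that] in auto)
  have tc: "trn z n \<in> c00 S" if "z \<in> l1sum S" for z n
    by (rule trn_c00[of S z n]) (use subsp L0(1,2)[OF that] in auto)
  have J_trn: "J (trn z n) = (\<Sum>k<n. J (sgl k (z k)))" if z: "z \<in> l1sum S" for z n
  proof (induction n)
    case 0
    have "trn z 0 = (\<lambda>k. 0 *\<^sub>R trn z 0 k)" by (simp add: trn_def)
    hence "J (trn z 0) = 0 *\<^sub>R J (trn z 0)" using J_scale[OF tc[OF z]] by metis
    then show ?case by simp
  next
    case (Suc n)
    have "trn z (Suc n) = (\<lambda>i. trn z n i + sgl n (z n) i)"
      by (auto simp: trn_def sgl_def)
    hence "J (trn z (Suc n)) = J (trn z n) + J (sgl n (z n))"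
      using J_add[OF tc[OF z] sc[OF z]] by simp
    then show ?case using Suc by simp
  qed
  define T where "T z = (\<Sum>k. J (sgl k (z k)))" for z
  have summ: "summable (\<lambda>k. norm (J (sgl k (z k))))" if z: "z \<in> l1sum S" for z
  proof (rule summable_norm_comparison_test)
    show "\<exists>N. \<forall>n\<ge>N. norm (J (sgl n (z n))) \<le> norm (z n)"
      using Jb[OF sc[OF z]] l1norm_sgl by metis
    show "summable (\<lambda>n. norm (z n))" using L0(3)[OF z] .
  qed
  have Tlim: "(\<lambda>n. J (trn z n)) \<longlonglongrightarrow> T z" if z: "z \<in> l1sum S" for z
    unfolding J_trn[OF z] T_def by (rule summable_LIMSEQ[OF summable_norm_cancel[OF summ[OF z]]])
  have Tb: "(1/2) * l1norm z \<le> norm (T z) \<and> norm (T z) \<le> l1norm z" if z: "z \<in> l1sum S" for z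
  proof -
    have a: "(\<lambda>n. norm (J (trn z n))) \<longlonglongrightarrow> norm (T z)" by (rule tendsto_norm[OF Tlim[OF z]])
    have b: "(\<lambda>n. \<Sum>k<n. norm (z k)) \<longlonglongrightarrow> l1norm z"
      unfolding l1norm_def by (rule summable_LIMSEQ[OF L0(3)[OF z]])
    have c: "(\<lambda>n. (1/2) * (\<Sum>k<n. norm (z k))) \<longlonglongrightarrow> (1/2) * l1norm z"
      by (rule tendsto_mult[OF tendsto_const b])
    have bb: "(1/2) * (\<Sum>k<n. norm (z k)) \<le> norm (J (trn z n)) \<and> norm (J (trn z n)) \<le> (\<Sum>k<n. norm (z k))" for n
      using Jb[OF tc[OF z], of n] l1norm_trn[of z n] by simp
    show ?thesis
      using LIMSEQ_le[OF c a] LIMSEQ_le[OF a b] bb by blast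
  qed
  have l1_add: "(\<lambda>k. z k + w k) \<in> l1sum S" if "z \<in> l1sum S" "w \<in> l1sum S" for z w
  proof -
    have "summable (\<lambda>k. norm (z k + w k))"
      by (rule summable_norm_comparison_test[OF _ summable_add[OF L0(3)[OF that(1)] L0(3)[OF that(2)]]])
         (auto intro: norm_triangle_ineq)
    thus ?thesis using L0[OF that(1)] L0[OF that(2)] subsp by (auto simp: l1sum_def subspace_add)
  qed
  have l1_scale: "(\<lambda>k. c *\<^sub>R z k) \<in> l1sum S" if "z \<in> l1sum S" for z c
  proof -
    have "summable (\<lambda>k. norm (c *\<^sub>R z k))"
      using summable_mult[OF L0(3)[OF that], of "\<bar>c\<bar>"] by simp
    thus ?thesis using L0[OF that] subsp by (auto simp: l1sum_def subspace_scale)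
  qed
  have T_add: "T (\<lambda>k. z k + w k) = T z + T w" if z: "z \<in> l1sum S" and w: "w \<in> l1sum S" for z w
  proof -
    have "J (sgl k (z k + w k)) = J (sgl k (z k)) + J (sgl k (w k))" for k
    proof -
      have "sgl k (z k + w k) = (\<lambda>i. sgl k (z k) i + sgl k (w k) i)" by (auto simp: sgl_def)
      thus ?thesis using J_add[OF sc[OF z] sc[OF w]] by simp
    qed
    hence "T (\<lambda>k. z k + w k) = (\<Sum>k. J (sgl k (z k)) + J (sgl k (w k)))" by (simp add: T_def)
    also have "\<dots> = T z + T w" unfolding T_def
      by (rule suminf_add[symmetric, OF summable_norm_cancel[OF summ[OF z]] summable_norm_cancel[OF summ[OF w]]])
    finally show ?thesis .
  qed
  have T_scale: "T (\<lambda>k. c *\<^sub>R z k) = c *\<^sub>R T z" if z: "z \<in> l1sum S" for z c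
  proof -
    have "J (sgl k (c *\<^sub>R z k)) = c *\<^sub>R J (sgl k (z k))" for k
    proof -
      have "sgl k (c *\<^sub>R z k) = (\<lambda>i. c *\<^sub>R sgl k (z k) i)" by (auto simp: sgl_def)
      thus ?thesis using J_scale[OF sc[OF z]] by simp
    qed
    hence "T (\<lambda>k. c *\<^sub>R z k) = (\<Sum>k. c *\<^sub>R J (sgl k (z k)))" by (simp add: T_def)
    also have "\<dots> = c *\<^sub>R T z" unfolding T_def
      by (rule suminf_scaleR_right[symmetric, OF summable_norm_cancel[OF summ[OF z]]])
    finally show ?thesis .
  qed
  have l1_diff: "(\<lambda>k. z k - w k) \<in> l1sum S" and T_diff: "T (\<lambda>k. z k - w k) = T z - T w"
    if z: "z \<in> l1sum S" and w: "w \<in> l1sum S" for z w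
  proof -
    have e: "(\<lambda>k. z k - w k) = (\<lambda>k. z k + (\<lambda>k. (-1) *\<^sub>R w k) k)" by simp
    show "(\<lambda>k. z k - w k) \<in> l1sum S" unfolding e by (rule l1_add[OF z l1_scale[OF w]])
    show "T (\<lambda>k. z k - w k) = T z - T w" unfolding e
      using T_add[OF z l1_scale[OF w, of "-1"]] T_scale[OF w, of "-1"] by simp
  qed
  have T_J: "T x = J x" if x: "x \<in> c00 S" for x
  proof -
    have xl: "x \<in> l1sum S" by (rule c00_l1[OF x])
    have fin: "finite {k. x k \<noteq> 0}" using x by (auto simp: c00_def)
    obtain m where m: "\<forall>k\<in>{k. x k \<noteq> 0}. k < m" using fin finite_nat_set_iff_bounded by blast
    have ev: "\<forall>n\<ge>m. J (trn x n) = J x"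
    proof (intro allI impI)
      fix n assume "m \<le> n"
      hence "trn x n = x" using m by (force simp: trn_def)
      thus "J (trn x n) = J x" by simp
    qed
    have "(\<lambda>n. J (trn x n)) \<longlonglongrightarrow> J x"
      by (rule Lim_transform_eventually[OF tendsto_const]) (use ev in \<open>force simp: eventually_sequentially\<close>)
    thus ?thesis using Tlim[OF xl] LIMSEQ_unique by blast
  qed
  have inj: "inj_on T (l1sum S)"
  proof (rule inj_onI)
    fix z w assume z: "z \<in> l1sum S" and w: "w \<in> l1sum S" and e: "T z = T w"
    have "T (\<lambda>k. z k - w k) = 0" using T_diff[OF z w] e by simp
    hence "l1norm (\<lambda>k. z k - w k) \<le> 0" using Tb[OF l1_diff[OF z w]] by simp
    hence "norm (z k - w k) \<le> 0" for k
      using term_le_l1norm[OF L0(3)[OF l1_diff[OF z w]], of k] by linarith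
    thus "z = w" by (auto intro: ext)
  qed
  have surj: "y \<in> T ` l1sum S" for y
  proof -
    have "y \<in> closure (J ` c00 S)" using J_dense by simp
    then obtain x where x: "\<forall>n. x n \<in> J ` c00 S" and xl: "x \<longlonglongrightarrow> y"
      using closure_sequential by blast
    have "\<forall>n. \<exists>u. u \<in> c00 S \<and> x n = J u" using x by blast
    then obtain u where u: "\<And>n. u n \<in> c00 S" "\<And>n. x n = J (u n)" by metis
    have ul: "\<And>n. u n \<in> l1sum S" using u c00_l1 by blast
    have xT: "\<And>n. x n = T (u n)" using u T_J by simp
    have cx: "Cauchy x" using xl by (rule LIMSEQ_imp_Cauchy)
    have cau: "\<exists>N. \<forall>i\<ge>N. \<forall>j\<ge>N. l1norm (\<lambda>k. u i k - u j k) < e" if e: "e > 0" for e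
    proof -
      obtain M where M: "\<forall>m\<ge>M. \<forall>n\<ge>M. dist (x m) (x n) < e/2"
        using metric_CauchyD[OF cx, of "e/2"] e by auto
      have "l1norm (\<lambda>k. u i k - u j k) < e" if "i \<ge> M" "j \<ge> M" for i j
      proof -
        have "(1/2) * l1norm (\<lambda>k. u i k - u j k) \<le> norm (T (\<lambda>k. u i k - u j k))"
          using Tb[OF l1_diff[OF ul ul]] by blast
        also have "\<dots> = dist (x i) (x j)" using T_diff[OF ul ul] xT by (simp add: dist_norm)
        also have "\<dots> < e/2" using M that by blast
        finally show ?thesis by simp
      qed
      thus ?thesis by blast
    qed
    obtain z where z: "z \<in> l1sum S" and zl: "(\<lambda>j. l1norm (\<lambda>k. u j k - z k)) \<longlonglongrightarrow> 0"
      using l1_complete[OF clsd ul cau] by blast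
    have "(\<lambda>j. T z - x j) \<longlonglongrightarrow> 0"
    proof (rule Lim_null_comparison[OF _ zl])
      show "\<forall>\<^sub>F j in sequentially. norm (T z - x j) \<le> l1norm (\<lambda>k. u j k - z k)"
      proof (rule always_eventually, rule allI)
        fix j
        have "norm (T z - x j) = norm (T (\<lambda>k. z k - u j k))" using T_diff[OF z ul] xT by simp
        also have "\<dots> \<le> l1norm (\<lambda>k. z k - u j k)" using Tb[OF l1_diff[OF z ul]] by blast
        also have "\<dots> = l1norm (\<lambda>k. u j k - z k)" unfolding l1norm_def by (simp add: norm_minus_commute)
        finally show "norm (T z - x j) \<le> l1norm (\<lambda>k. u j k - z k)" .
      qed
    qed
    hence "(\<lambda>j. T z - (T z - x j)) \<longlonglongrightarrow> T z - 0" by (intro tendsto_diff tendsto_const)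
    hence "x \<longlonglongrightarrow> T z" by simp
    hence "T z = y" using xl LIMSEQ_unique by blast
    thus ?thesis using z by blast
  qed
  have "bij_betw T (l1sum S) UNIV" unfolding bij_betw_def using inj surj by blast
  thus ?thesis using T_add T_scale T_J Tb by blast
qed

end
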